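(* Let $Q=\{0,1,\dots,n-1\}$ and alphabet $\{a,b\}$, and define three DFAs on $Q$, all with $b$ acting by $i\mapsto i+1$ for $0\le i\le n-2$ and $n-1\mapsto 0$: (1) the Černý automaton $\mathscr{C}_n$ ($n\ge 2$): $a$ fixes $i$ for $0\le i\le n-2$ and sends $n-1\mapsto 0$; (2) $\mathscr{L}_n$ ($n\ge 3$): $a$ sends $i\mapsto i+1$ for $0\le i\le n-4$, $n-3\mapsto n-1$, $n-2\mapsto 0$, $n-1\mapsto 0$; (3) $\mathscr{V}_n$ ($n\ge 2$): $a$ sends $i\mapsto i+1$ for $0\le i\le n-3$, $n-2\mapsto 0$, $n-1\mapsto 0$. Then $rc(Syn(\mathscr{C}_n))=rc(Syn(\mathscr{L}_n))=rc(Syn(\mathscr{V}_n))=n$.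
   Context: A DFA $\langle Q,\Sigma,\delta\rangle$ has a total transition function $\delta:Q\times\Sigma\to Q$ extended to words; it is synchronizing if some word $w$ satisfies $\delta(q,w)=\delta(q',w)$ for all $q,q'\in Q$, and $Syn(\mathscr{A})$ denotes the set of all such words. A language $L$ is ideal if $L=\Sigma^*L\Sigma^*$ (each $Syn(\mathscr{A})$ is ideal). The reset complexity $rc(L)$ of an ideal language $L$ is the minimal number of states of a synchronizing DFA $\mathscr{B}$ with $Syn(\mathscr{B})=L$. *)

theory Defs
  imports Main
begin

datatype sym = SymA | SymB

definition delta_word :: "('q \<Rightarrow> 'a \<Rightarrow> 'q) \<Rightarrow> 'q \<Rightarrow> 'a list \<Rightarrow> 'q" where
  "delta_word \<delta> q w = foldl \<delta> q w"

definition is_dfa :: "'q set \<Rightarrow> ('q \<Rightarrow> 'a \<Rightarrow> 'q) \<Rightarrow> bool" where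
  "is_dfa Q \<delta> \<longleftrightarrow> finite Q \<and> Q \<noteq> {} \<and> (\<forall>q\<in>Q. \<forall>c. \<delta> q c \<in> Q)"

definition Syn :: "'q set \<Rightarrow> ('q \<Rightarrow> 'a \<Rightarrow> 'q) \<Rightarrow> 'a list set" where
  "Syn Q \<delta> = {w. \<forall>q\<in>Q. \<forall>q'\<in>Q. delta_word \<delta> q w = delta_word \<delta> q' w}"

definition synchronizing :: "'q set \<Rightarrow> ('q \<Rightarrow> 'a \<Rightarrow> 'q) \<Rightarrow> bool" where
  "synchronizing Q \<delta> \<longleftrightarrow> Syn Q \<delta> \<noteq> {}"

text \<open>Reset complexity: minimal number of states of a synchronizing DFA (over the same
  alphabet) whose set of synchronizing words is L. Any finite state set is represented,
  up to renaming, by {0..<m}.\<close>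
definition rc :: "'a list set \<Rightarrow> nat" where
  "rc L = (LEAST m. \<exists>\<delta> :: nat \<Rightarrow> 'a \<Rightarrow> nat.
             is_dfa {0..<m} \<delta> \<and> synchronizing {0..<m} \<delta> \<and> Syn {0..<m} \<delta> = L)"

definition shift :: "nat \<Rightarrow> nat \<Rightarrow> nat" where
  "shift n q = (if q + 1 < n then q + 1 else 0)"

definition cerny :: "nat \<Rightarrow> nat \<Rightarrow> sym \<Rightarrow> nat" where
  "cerny n q c = (case c of
      SymA \<Rightarrow> (if q + 1 = n then 0 else q)
    | SymB \<Rightarrow> shift n q)"

definition L_aut :: "nat \<Rightarrow> nat \<Rightarrow> sym \<Rightarrow> nat" where
  "L_aut n q c = (case c of
      SymA \<Rightarrow> (if q + 3 < n then q + 1 else if q + 3 = n then n - 1 else 0)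
    | SymB \<Rightarrow> shift n q)"

definition V_aut :: "nat \<Rightarrow> nat \<Rightarrow> sym \<Rightarrow> nat" where
  "V_aut n q c = (case c of
      SymA \<Rightarrow> (if q + 2 < n then q + 1 else 0)
    | SymB \<Rightarrow> shift n q)"

end

theory Submission
  imports Defs
begin

lemma dw_append: "delta_word \<delta> q (u @ v) = delta_word \<delta> (delta_word \<delta> q u) v"
  by (simp add: delta_word_def)

lemma dw_single: "delta_word \<delta> q [c] = \<delta> q c"
  by (simp add: delta_word_def)

lemma dw_Nil: "delta_word \<delta> q [] = q"
  by (simp add: delta_word_def)

lemma dw_rep_Suc: "delta_word \<delta> q (replicate (Suc k) c) = delta_word \<delta> (\<delta> q c) (replicate k c)"
  by (simp add: delta_word_def)

lemma dw_pow: "delta_word \<delta> q (concat (replicate i y)) = ((\<lambda>p. delta_word \<delta> p y) ^^ i) q"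
proof (induction i arbitrary: q)
  case 0 then show ?case by (simp add: dw_Nil)
next
  case (Suc i)
  have "delta_word \<delta> q (concat (replicate (Suc i) y)) = delta_word \<delta> (delta_word \<delta> q y) (concat (replicate i y))"
    by (simp add: dw_append)
  also have "\<dots> = ((\<lambda>p. delta_word \<delta> p y) ^^ i) (delta_word \<delta> q y)" by (rule Suc.IH)
  finally show ?case by (simp add: funpow_Suc_right del: funpow.simps)
qed

lemma dw_closed: assumes "\<forall>q\<in>Q. \<forall>c. \<delta> q c \<in> Q" "q \<in> Q" shows "delta_word \<delta> q w \<in> Q"
  using assms(2) unfolding delta_word_def
  by (induction w arbitrary: q rule: rev_induct) (auto simp: assms(1))

lemma funpow_closed: assumes "\<forall>q\<in>Q. g q \<in> Q" "q \<in> Q" shows "(g ^^ i) q \<in> Q"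
  using assms by (induction i) auto

lemma chain_card:
  fixes g :: "'q \<Rightarrow> 'q"
  assumes fin: "finite Q" and cl: "\<forall>q\<in>Q. g q \<in> Q"
    and sing: "\<forall>q\<in>Q. \<forall>q'\<in>Q. (g ^^ (Suc k)) q = (g ^^ (Suc k)) q'"
    and ns: "q1 \<in> Q" "q2 \<in> Q" "(g ^^ k) q1 \<noteq> (g ^^ k) q2"
  shows "card Q \<ge> k + 2"
proof -
  define S where "S i = (g ^^ i) ` Q" for i
  have SS: "S (Suc i) = g ` S i" for i by (simp add: S_def image_comp)
  have sub: "S (Suc i) \<subseteq> S i" for i
  proof -
    have "S (Suc i) = (g ^^ i) ` (g ` Q)" by (simp add: S_def image_comp funpow_Suc_right del: funpow.simps)
    also have "\<dots> \<subseteq> S i" using cl by (auto simp: S_def)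
    finally show ?thesis .
  qed
  have stab: "S (Suc i) = S i \<Longrightarrow> S (i + t) = S i" for i t
    by (induction t) (auto simp: SS)
  have finS: "finite (S i)" for i using fin by (simp add: S_def)
  have Sk1: "card (S (Suc k)) \<le> 1"
  proof -
    have "S (Suc k) \<subseteq> {(g ^^ Suc k) q1}" unfolding S_def image_subset_iff using sing ns(1) by blast
    then have "card (S (Suc k)) \<le> card {(g ^^ Suc k) q1}" by (intro card_mono) auto
    then show ?thesis by simp
  qed
  have Sk2: "card (S k) \<ge> 2"
  proof -
    have "{(g ^^ k) q1, (g ^^ k) q2} \<subseteq> S k" using ns by (auto simp: S_def)
    then have "card {(g ^^ k) q1, (g ^^ k) q2} \<le> card (S k)" using finS card_mono by blast
    then show ?thesis using ns(3) by simp
  qed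
  have neq: "S (Suc i) \<noteq> S i" if "i \<le> k" for i
  proof
    assume "S (Suc i) = S i"
    then have a: "S (i + (k - i)) = S i" and b: "S (i + (Suc k - i)) = S i" using stab by blast+
    have "S k = S (Suc k)" using a b that by (simp add: Suc_diff_le)
    then show False using Sk1 Sk2 by simp
  qed
  have ne: "S (Suc k) \<noteq> {}" using ns(1) by (auto simp: S_def)
  have main: "j \<le> Suc k \<Longrightarrow> card (S (Suc k - j)) \<ge> j + 1" for j
  proof (induction j)
    case 0 then show ?case using ne finS by (simp add: Suc_le_eq card_gt_0_iff)
  next
    case (Suc j)
    define i where "i = k - j"
    have i1: "Suc k - j = Suc i" and i2: "Suc k - Suc j = i" and ik: "i \<le> k" using Suc.prems by (auto simp: i_def)
    have "S (Suc i) \<subset> S i" using sub neq[OF ik] by auto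
    then have "card (S (Suc i)) < card (S i)" using finS psubset_card_mono by blast
    then show ?case using Suc i1 i2 by simp
  qed
  have "card (S 0) \<ge> k + 2" using main[of "Suc k"] by simp
  then show ?thesis by (simp add: S_def)
qed


lemma lower:
  fixes A :: "nat \<Rightarrow> 'a \<Rightarrow> nat" and \<delta> :: "nat \<Rightarrow> 'a \<Rightarrow> nat"
  assumes d: "is_dfa {0..<m} \<delta>" and eq: "Syn {0..<m} \<delta> = Syn {0..<n} A"
    and s1: "concat (replicate (Suc k) y) \<in> Syn {0..<n} A"
    and s2: "concat (replicate k y) \<notin> Syn {0..<n} A"
  shows "k + 2 \<le> m"
proof -
  define g where "g p = delta_word \<delta> p y" for p
  have gp: "(g ^^ i) q = delta_word \<delta> q (concat (replicate i y))" for i q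
    unfolding g_def by (rule dw_pow[symmetric])
  have cl0: "\<forall>q\<in>{0..<m}. \<forall>c. \<delta> q c \<in> {0..<m}" using d unfolding is_dfa_def by blast
  have cl: "\<forall>q\<in>{0..<m}. g q \<in> {0..<m}"
  proof
    fix q assume "q \<in> {0..<m}"
    then show "g q \<in> {0..<m}" unfolding g_def by (rule dw_closed[OF cl0])
  qed
  have s1': "concat (replicate (Suc k) y) \<in> Syn {0..<m} \<delta>" using s1 eq by simp
  have s2': "concat (replicate k y) \<notin> Syn {0..<m} \<delta>" using s2 eq by simp
  have a: "\<forall>q\<in>{0..<m}. \<forall>q'\<in>{0..<m}. (g ^^ Suc k) q = (g ^^ Suc k) q'"
    using s1' unfolding Syn_def mem_Collect_eq gp .
  obtain q1 q2 where q: "q1 \<in> {0..<m}" "q2 \<in> {0..<m}" "(g ^^ k) q1 \<noteq> (g ^^ k) q2"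
    using s2' unfolding Syn_def mem_Collect_eq gp by blast
  have "k + 2 \<le> card {0..<m}" by (rule chain_card[OF _ cl a q]) simp
  then show ?thesis by simp
qed

lemma rc_eq:
  fixes A :: "nat \<Rightarrow> 'a \<Rightarrow> nat"
  assumes d: "is_dfa {0..<n} A" and n: "n \<ge> 2"
    and s1: "concat (replicate (n - 1) y) \<in> Syn {0..<n} A"
    and s2: "concat (replicate (n - 2) y) \<notin> Syn {0..<n} A"
  shows "rc (Syn {0..<n} A) = n"
  unfolding rc_def
proof (rule Least_equality)
  show "\<exists>\<delta>::nat \<Rightarrow> 'a \<Rightarrow> nat. is_dfa {0..<n} \<delta> \<and> synchronizing {0..<n} \<delta> \<and> Syn {0..<n} \<delta> = Syn {0..<n} A"
    using d s1 unfolding synchronizing_def by blast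
next
  fix m assume "\<exists>\<delta>::nat \<Rightarrow> 'a \<Rightarrow> nat. is_dfa {0..<m} \<delta> \<and> synchronizing {0..<m} \<delta> \<and> Syn {0..<m} \<delta> = Syn {0..<n} A"
  then obtain \<delta> :: "nat \<Rightarrow> 'a \<Rightarrow> nat" where "is_dfa {0..<m} \<delta>" "Syn {0..<m} \<delta> = Syn {0..<n} A" by blast
  moreover have "Suc (n - 2) = n - 1" using n by simp
  ultimately have "n - 2 + 2 \<le> m" using lower[of m \<delta> n A "n - 2" y] s1 s2 by simp
  then show "n \<le> m" using n by simp
qed

lemma shift_mod: assumes "q < n" shows "shift n q = Suc q mod n"
proof (cases "Suc q < n")
  case True then show ?thesis by (simp add: shift_def)
next
  case False then have "Suc q = n" using assms by simp
  then show ?thesis by (simp add: shift_def)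
qed

lemma rep_B:
  assumes "\<forall>q<n. \<delta> q SymB = shift n q" "q < n"
  shows "delta_word \<delta> q (replicate k SymB) = (q + k) mod n"
  using assms(2)
proof (induction k arbitrary: q)
  case 0 then show ?case by (simp add: dw_Nil)
next
  case (Suc k)
  have "\<delta> q SymB = Suc q mod n" using assms(1) Suc.prems shift_mod by simp
  moreover have "Suc q mod n < n" using Suc.prems by simp
  ultimately have "delta_word \<delta> q (replicate (Suc k) SymB) = (Suc q mod n + k) mod n"
    using Suc.IH by (simp only: dw_rep_Suc)
  then show ?case by (simp add: mod_add_left_eq)
qed

lemma pow_pred: assumes "\<forall>q<n. g q = q - 1" "q < n" shows "(g ^^ i) q = q - i"
  using assms(2) proof (induction i)
  case 0 then show ?case by simp
next
  case (Suc i) then show ?case using assms(1) by simp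
qed

lemma pow_succ: assumes "\<forall>q<n. g q = min (q + 1) (n - 1)" "q < n" shows "(g ^^ i) q = min (q + i) (n - 1)"
  using assms(2) proof (induction i)
  case 0 then show ?case by simp
next
  case (Suc i)
  have "(g ^^ i) q < n" using Suc by simp
  moreover have "n > 0" using Suc by simp
  ultimately show ?case using assms(1) Suc by (auto simp: min_def)
qed

lemma rc_pred:
  fixes A :: "nat \<Rightarrow> 'a \<Rightarrow> nat"
  assumes d: "is_dfa {0..<n} A" and n: "n \<ge> 2"
    and y: "\<forall>q<n. delta_word A q y = q - 1"
  shows "rc (Syn {0..<n} A) = n"
proof (rule rc_eq[OF d n])
  show "concat (replicate (n - 1) y) \<in> Syn {0..<n} A"
    unfolding Syn_def using pow_pred[OF y] by (simp add: dw_pow)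
  have "((\<lambda>p. delta_word A p y) ^^ (n - 2)) 0 \<noteq> ((\<lambda>p. delta_word A p y) ^^ (n - 2)) (n - 1)"
    using pow_pred[OF y] n by simp
  then show "concat (replicate (n - 2) y) \<notin> Syn {0..<n} A"
  proof -
    have "0 \<in> {0..<n}" "n - 1 \<in> {0..<n}" using n by auto
    then show ?thesis using \<open>_ \<noteq> _\<close> unfolding Syn_def mem_Collect_eq dw_pow by blast
  qed
qed

lemma rc_succ:
  fixes A :: "nat \<Rightarrow> 'a \<Rightarrow> nat"
  assumes d: "is_dfa {0..<n} A" and n: "n \<ge> 2"
    and y: "\<forall>q<n. delta_word A q y = min (q + 1) (n - 1)"
  shows "rc (Syn {0..<n} A) = n"
proof (rule rc_eq[OF d n])
  show "concat (replicate (n - 1) y) \<in> Syn {0..<n} A"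
    unfolding Syn_def using pow_succ[OF y] by (simp add: dw_pow)
  have "((\<lambda>p. delta_word A p y) ^^ (n - 2)) 0 \<noteq> ((\<lambda>p. delta_word A p y) ^^ (n - 2)) (n - 1)"
    using pow_succ[OF y] n by simp
  then show "concat (replicate (n - 2) y) \<notin> Syn {0..<n} A"
  proof -
    have "0 \<in> {0..<n}" "n - 1 \<in> {0..<n}" using n by auto
    then show ?thesis using \<open>_ \<noteq> _\<close> unfolding Syn_def mem_Collect_eq dw_pow by blast
  qed
qed


lemma mod_pred1: fixes q n :: nat assumes "q < n" shows "(q + (n - 1)) mod n = (if q = 0 then n - 1 else q - 1)"
proof (cases "q = 0")
  case True have "n - 1 < n" using assms by simp
  then show ?thesis using True by simp
next
  case False then have e: "q + (n - 1) = (q - 1) + n" using assms by simp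
  have "(q + (n - 1)) mod n = ((q - 1) + n) mod n" by (simp only: e)
  also have "\<dots> = q - 1" using assms by simp
  finally show ?thesis using False by simp
qed

lemma mod_pred2: fixes q n :: nat assumes "q < n" "n \<ge> 2" shows "(q + (n - 2)) mod n = (if q = 0 then n - 2 else if q = 1 then n - 1 else q - 2)"
proof -
  consider "q = 0" | "q = 1" | "q \<ge> 2" by linarith
  then show ?thesis
  proof cases
    case 3 then have e: "q + (n - 2) = (q - 2) + n" using assms by simp
    have "(q + (n - 2)) mod n = ((q - 2) + n) mod n" by (simp only: e)
    also have "\<dots> = q - 2" using assms by simp
    finally show ?thesis using 3 by simp
  qed (use assms in auto)
qed

lemma cerny_dfa: "n \<ge> 2 \<Longrightarrow> is_dfa {0..<n} (cerny n)"
  unfolding is_dfa_def by (auto simp: cerny_def shift_def split: sym.splits)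

lemma V_dfa: "n \<ge> 2 \<Longrightarrow> is_dfa {0..<n} (V_aut n)"
  unfolding is_dfa_def by (auto simp: V_aut_def shift_def split: sym.splits)

lemma L_dfa: "n \<ge> 3 \<Longrightarrow> is_dfa {0..<n} (L_aut n)"
  unfolding is_dfa_def by (auto simp: L_aut_def shift_def split: sym.splits)

lemma cerny_y: assumes "n \<ge> 2" shows "\<forall>q<n. delta_word (cerny n) q (replicate (n - 1) SymB @ [SymA]) = q - 1"
proof (intro allI impI)
  fix q assume q: "q < n"
  have "\<forall>q<n. cerny n q SymB = shift n q" by (simp add: cerny_def)
  then have "delta_word (cerny n) q (replicate (n - 1) SymB) = (q + (n - 1)) mod n" using rep_B q by blast
  also have "\<dots> = (if q = 0 then n - 1 else q - 1)" using mod_pred1 q by blast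
  finally have h: "delta_word (cerny n) q (replicate (n - 1) SymB) = (if q = 0 then n - 1 else q - 1)" .
  show "delta_word (cerny n) q (replicate (n - 1) SymB @ [SymA]) = q - 1"
    unfolding dw_append dw_single h using q assms by (auto simp: cerny_def)
qed

lemma V_y: assumes "n \<ge> 2" shows "\<forall>q<n. delta_word (V_aut n) q (replicate (n - 2) SymB @ [SymA]) = q - 1"
proof (intro allI impI)
  fix q assume q: "q < n"
  have "\<forall>q<n. V_aut n q SymB = shift n q" by (simp add: V_aut_def)
  then have "delta_word (V_aut n) q (replicate (n - 2) SymB) = (q + (n - 2)) mod n" using rep_B q by blast
  also have "\<dots> = (if q = 0 then n - 2 else if q = 1 then n - 1 else q - 2)" using mod_pred2 q assms by blast
  finally have h: "delta_word (V_aut n) q (replicate (n - 2) SymB) = (if q = 0 then n - 2 else if q = 1 then n - 1 else q - 2)" .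
  show "delta_word (V_aut n) q (replicate (n - 2) SymB @ [SymA]) = q - 1"
    unfolding dw_append dw_single h using q assms by (auto simp: V_aut_def)
qed

lemma L_powA: "q + j + 3 \<le> n \<Longrightarrow> delta_word (L_aut n) q (replicate j SymA) = q + j"
proof (induction j arbitrary: q)
  case 0 then show ?case by (simp add: dw_Nil)
next
  case (Suc j)
  have "L_aut n q SymA = Suc q" using Suc.prems by (simp add: L_aut_def)
  then show ?case using Suc by (simp only: dw_rep_Suc)
qed

lemma dw_rep_add: "delta_word \<delta> q (replicate (j + k) c) = delta_word \<delta> (delta_word \<delta> q (replicate j c)) (replicate k c)"
  by (simp add: replicate_add dw_append)

lemma L_aSucc: assumes "n \<ge> 3" "q < n"
  shows "delta_word (L_aut n) q (replicate (n - 2) SymA) = (if q = 0 then n - 1 else if q \<le> n - 3 then q - 1 else n - 3)"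
proof -
  consider "q = 0" | "q \<ge> 1" "q \<le> n - 3" | "q \<ge> n - 2" by linarith
  then show ?thesis
  proof cases
    case 1
    have e: "n - 2 = (n - 3) + 1" using assms by simp
    have "delta_word (L_aut n) q (replicate (n - 3) SymA) = n - 3" using L_powA[of q "n-3" n] 1 assms by simp
    then show ?thesis unfolding e dw_rep_add using 1 assms by (simp add: dw_single L_aut_def)
  next
    case 2
    have e: "n - 2 = (n - 3 - q) + 1 + 1 + (q - 1)" using assms 2 by simp
    have a1: "delta_word (L_aut n) q (replicate (n - 3 - q) SymA) = n - 3" using L_powA[of q "n-3-q" n] 2 assms by simp
    have a2: "L_aut n (n - 3) SymA = n - 1" using assms by (simp add: L_aut_def)
    have a3: "L_aut n (n - 1) SymA = 0" using assms by (simp add: L_aut_def)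
    have a4: "delta_word (L_aut n) 0 (replicate (q - 1) SymA) = q - 1" using L_powA[of 0 "q-1" n] 2 assms by simp
    show ?thesis unfolding e dw_rep_add using 2 a1 a2 a3 a4 by (simp add: dw_single)
  next
    case 3
    have e: "n - 2 = 1 + (n - 3)" using assms by simp
    have "\<not> q + 3 < n" "q + 3 \<noteq> n" using assms 3 by linarith+
    then have a1: "L_aut n q SymA = 0" by (simp add: L_aut_def)
    have a4: "delta_word (L_aut n) 0 (replicate (n - 3) SymA) = n - 3" using L_powA[of 0 "n-3" n] assms by simp
    show ?thesis unfolding e dw_rep_add using 3 a1 a4 assms by (simp add: dw_single)
  qed
qed

lemma L_y: assumes "n \<ge> 3"
  shows "\<forall>q<n. delta_word (L_aut n) q (replicate (n - 2) SymA @ replicate 2 SymB) = min (q + 1) (n - 1)"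
proof (intro allI impI)
  fix q assume q: "q < n"
  let ?p = "delta_word (L_aut n) q (replicate (n - 2) SymA)"
  have p: "?p < n" using L_aSucc[OF assms q] assms by auto
  have "\<forall>q<n. L_aut n q SymB = shift n q" by (simp add: L_aut_def)
  then have "delta_word (L_aut n) ?p (replicate 2 SymB) = (?p + 2) mod n" using rep_B p by blast
  moreover have "(?p + 2) mod n = min (q + 1) (n - 1)"
  proof -
    consider "q = 0" | "q \<ge> 1" "q \<le> n - 3" | "q \<ge> n - 2" by linarith
    then show ?thesis
    proof cases
      case 1
      have e: "n - 1 + 2 = 1 + n" using assms by simp
      have "(n - 1 + 2) mod n = (1 + n) mod n" by (simp only: e)
      also have "\<dots> = 1 mod n" by (simp only: mod_add_self2)
      also have "\<dots> = 1" using assms by simp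
      finally have "(n - 1 + 2) mod n = 1" .
      moreover have "?p = n - 1" using 1 L_aSucc[OF assms q] by simp
      ultimately show ?thesis using 1 assms by simp
    next
      case 2 then show ?thesis using assms L_aSucc[OF assms q] by simp
    next
      case 3
      have "?p = n - 3" using 3 assms L_aSucc[OF assms q] by auto
      moreover have "n - 3 + 2 = n - 1" "n - 1 < n" "min (q + 1) (n - 1) = n - 1" using assms 3 by linarith+
      ultimately show ?thesis by simp
    qed
  qed
  ultimately show "delta_word (L_aut n) q (replicate (n - 2) SymA @ replicate 2 SymB) = min (q + 1) (n - 1)"
    by (simp only: dw_append)
qed

theorem theorem1:
  fixes n :: nat
  shows "(n \<ge> 2 \<longrightarrow> rc (Syn {0..<n} (cerny n)) = n)
       \<and> (n \<ge> 3 \<longrightarrow> rc (Syn {0..<n} (L_aut n)) = n)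
       \<and> (n \<ge> 2 \<longrightarrow> rc (Syn {0..<n} (V_aut n)) = n)"
  using rc_pred[OF cerny_dfa _ cerny_y] rc_pred[OF V_dfa _ V_y] rc_succ[OF L_dfa _ L_y]
  by auto

end
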